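(* If $A,B\in\mathcal{D}$ and $d(A)<d(B)$, then there exists $D\in\mathcal{D}$ such that $A\cap B\subseteq D\subseteq B$ and $d(D)=d(A)$.
   Context: $\mathbb{N}=\{1,2,3,\dots\}$. For $A\subseteq\mathbb{N}$ let $A(n)=|A\cap[1,n]|$. Let $\mathcal{D}$ be the collection of all $A\subseteq\mathbb{N}$ for which the asymptotic density $d(A)=\lim_{n\to\infty}\frac{A(n)}{n}$ exists. *)

theory Defs
  imports Complex_Main
begin

definition counting :: "nat set \<Rightarrow> nat \<Rightarrow> nat" where
  "counting A n = card (A \<inter> {1..n})"

definition has_density :: "nat set \<Rightarrow> real \<Rightarrow> bool" where
  "has_density A \<delta> \<longleftrightarrow> ((\<lambda>n. real (counting A n) / real n) \<longlongrightarrow> \<delta>) sequentially"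

definition density_sets :: "nat set set" where
  "density_sets = {A. A \<subseteq> {1..} \<and> (\<exists>\<delta>. has_density A \<delta>)}"

definition density :: "nat set \<Rightarrow> real" where
  "density A = lim (\<lambda>n. real (counting A n) / real n)"

end

theory Submission
  imports Defs
begin

lemma counting_0[simp]: "counting X 0 = 0"
  by (simp add: counting_def)

lemma counting_Suc: "counting X (Suc n) = counting X n + (if Suc n \<in> X then 1 else 0)"
proof -
  have "X \<inter> {1..Suc n} = (if Suc n \<in> X then insert (Suc n) (X \<inter> {1..n}) else X \<inter> {1..n})"
    by (auto simp: le_Suc_eq)
  then show ?thesis by (simp add: counting_def)
qed

lemma counting_le: "counting X n \<le> n"
  unfolding counting_def using card_mono[of "{1..n}" "X \<inter> {1..n}"] by simp

lemma density_approx: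
  fixes e :: real
  assumes "has_density X d" "e > 0"
  shows "\<exists>K\<ge>0. \<forall>k. \<bar>real (counting X k) - d * k\<bar> \<le> e * k + K"
proof -
  from assms(1) have "\<forall>\<^sub>F n in sequentially. dist (real (counting X n) / real n) d < e"
    unfolding has_density_def using assms(2) tendstoD by blast
  then obtain N where N: "\<And>n. n \<ge> N \<Longrightarrow> \<bar>real (counting X n) / real n - d\<bar> < e"
    by (auto simp: eventually_sequentially dist_real_def)
  define K where "K = (1 + \<bar>d\<bar>) * real N"
  have K0: "K \<ge> 0" unfolding K_def by simp
  moreover have "\<bar>real (counting X k) - d * k\<bar> \<le> e * k + K" for k
  proof (cases "k \<ge> N \<and> k > 0")
    case True
    then have h: "\<bar>real (counting X k) / real k - d\<bar> < e" using N by blast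
    have "real (counting X k) - d*k = real k * (real (counting X k)/real k - d)"
      using True by (simp add: field_simps)
    then have "\<bar>real (counting X k) - d*k\<bar> = real k * \<bar>real (counting X k)/real k - d\<bar>"
      by (simp add: abs_mult)
    also have "\<dots> \<le> real k * e" using h by (intro mult_left_mono) auto
    finally show ?thesis using K0 by (simp add: mult.commute)
  next
    case False
    have c: "real (counting X k) \<le> real k" using counting_le by simp
    have "\<bar>real (counting X k) - d*k\<bar> \<le> real (counting X k) + \<bar>d\<bar> * k"
      by (simp add: abs_mult abs_triangle_ineq4[THEN order_trans])
    also have "\<dots> \<le> (1 + \<bar>d\<bar>) * k" using c by (simp add: algebra_simps)
    also have "\<dots> \<le> K"
    proof (cases "k = 0")
      case True then show ?thesis using K0 by simp
    next
      case False': False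
      then have "k < N" using False by auto
      then show ?thesis unfolding K_def by (intro mult_left_mono) auto
    qed
    finally show ?thesis using assms(2) by (smt (verit) of_nat_0_le_iff mult_nonneg_nonneg)
  qed
  ultimately show ?thesis by blast
qed

theorem lemma3p4:
  assumes "A \<in> density_sets" and "B \<in> density_sets"
    and "density A < density B"
  shows "\<exists>D \<in> density_sets. A \<inter> B \<subseteq> D \<and> D \<subseteq> B \<and> density D = density A"
proof -
  from assms(1) obtain a where Asub: "A \<subseteq> {1..}" and ha: "has_density A a"
    by (auto simp: density_sets_def)
  from assms(2) obtain b where Bsub: "B \<subseteq> {1..}" and hb: "has_density B b"
    by (auto simp: density_sets_def)
  have da: "density A = a" using ha unfolding has_density_def density_def by (rule limI)
  have db: "density B = b" using hb unfolding has_density_def density_def by (rule limI)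
  have ab: "a \<le> b" using assms(3) da db by simp
  define g where "g = rec_nat (0::nat) (\<lambda>n gn. gn + (if Suc n \<in> B \<and> (Suc n \<in> A \<or> real gn < a * real (Suc n)) then 1 else 0))"
  define D where "D = {k. k \<in> B \<and> (k \<in> A \<or> real (g (k - 1)) < a * real k)}"
  have g0: "g 0 = 0" by (simp add: g_def)
  have gS: "g (Suc n) = g n + (if Suc n \<in> D then 1 else 0)" for n
    by (simp add: g_def D_def)
  have cD: "counting D n = g n" for n
    by (induction n) (simp_all add: g0 gS counting_Suc)
  have DB: "D \<subseteq> B" and ABD: "A \<inter> B \<subseteq> D" unfolding D_def by auto
  have up: "\<exists>m\<le>n. real (g n) \<le> real (g m) + real (counting A n) - real (counting A m)
      \<and> (m = 0 \<or> real (g m) < a * m + 1)" for n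
  proof (induction n)
    case 0 then show ?case by simp
  next
    case (Suc n)
    then obtain m where m: "m \<le> n" "real (g n) \<le> real (g m) + real (counting A n) - real (counting A m)"
      "(m = 0 \<or> real (g m) < a * m + 1)" by blast
    show ?case
    proof (cases "Suc n \<in> B \<and> Suc n \<notin> A \<and> real (g n) < a * Suc n")
      case True
      then have "Suc n \<in> D" unfolding D_def by simp
      then have "g (Suc n) = g n + 1" using gS by simp
      then have "real (g (Suc n)) < a * Suc n + 1" using True by simp
      then show ?thesis by (intro exI[of _ "Suc n"]) simp
    next
      case False
      have "real (g (Suc n)) - real (g n) \<le> real (counting A (Suc n)) - real (counting A n)"
        using False by (auto simp: gS counting_Suc D_def)
      then show ?thesis using m by (intro exI[of _ m]) auto
    qed
  qed
  have low: "\<exists>m\<le>n. real (g n) \<ge> real (g m) + real (counting B n) - real (counting B m)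
      \<and> real (g m) \<ge> a * m" for n
  proof (induction n)
    case 0 then show ?case by (simp add: g0)
  next
    case (Suc n)
    then obtain m where m: "m \<le> n" "real (g n) \<ge> real (g m) + real (counting B n) - real (counting B m)"
      "real (g m) \<ge> a * m" by blast
    show ?case
    proof (cases "real (g (Suc n)) \<ge> a * Suc n")
      case True
      then show ?thesis by (intro exI[of _ "Suc n"]) simp
    next
      case False
      have "real (g n) \<le> real (g (Suc n))" by (simp add: gS)
      with False have lt: "real (g n) < a * Suc n" by simp
      have "real (g (Suc n)) - real (g n) \<ge> real (counting B (Suc n)) - real (counting B n)"
        using lt by (auto simp: gS counting_Suc D_def)
      then show ?thesis using m by (intro exI[of _ m]) auto
    qed
  qed
  have hD: "has_density D a"
    unfolding has_density_def
  proof (rule LIMSEQ_I)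
    fix r :: real assume r: "r > 0"
    define e where "e = r / 4"
    have e: "e > 0" using r by (simp add: e_def)
    obtain KA where KA: "KA \<ge> 0" "\<And>k. \<bar>real (counting A k) - a * k\<bar> \<le> e * k + KA"
      using density_approx[OF ha e] by blast
    obtain KB where KB: "KB \<ge> 0" "\<And>k. \<bar>real (counting B k) - b * k\<bar> \<le> e * k + KB"
      using density_approx[OF hb e] by blast
    define K where "K = KA + KB"
    have bound: "\<bar>real (g n) - a * n\<bar> \<le> 2 * e * n + 2 * K + 1" for n
    proof -
      obtain m where m: "m \<le> n" "real (g n) \<le> real (g m) + real (counting A n) - real (counting A m)"
        "(m = 0 \<or> real (g m) < a * m + 1)" using up by blast
      have em: "e * m \<le> e * n" using m(1) e by simp
      have "real (g n) \<le> a * n + 2 * e * n + 2 * K + 1"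
        using m(3)
      proof
        assume "m = 0"
        then show ?thesis using m(2) KA(2)[of n] KA(1) KB(1) e g0 unfolding K_def
          by (simp add: abs_le_iff)
      next
        assume "real (g m) < a * m + 1"
        then show ?thesis using m(2) KA(2)[of n] KA(2)[of m] KA(1) KB(1) em unfolding K_def
          by (simp add: abs_le_iff)
      qed
      moreover
      obtain m' where m': "m' \<le> n" "real (g n) \<ge> real (g m') + real (counting B n) - real (counting B m')"
        "real (g m') \<ge> a * m'" using low by blast
      have em': "e * m' \<le> e * n" using m'(1) e by simp
      have ba: "(b - a) * (real n - real m') \<ge> 0" using ab m'(1) by simp
      have "real (g n) \<ge> a * n - 2 * e * n - 2 * K"
        using m'(2,3) KB(2)[of n] KB(2)[of m'] KA(1) KB(1) em' ba unfolding K_def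
        by (simp add: abs_le_iff algebra_simps)
      ultimately show ?thesis by (simp add: abs_le_iff)
    qed
    define no where "no = nat \<lceil>(2 * K + 1) * 2 / r\<rceil> + 1"
    show "\<exists>no. \<forall>n\<ge>no. norm (real (counting D n) / real n - a) < r"
    proof (intro exI allI impI)
      fix n assume n: "n \<ge> no"
      have npos: "real n > 0" using n unfolding no_def by simp
      have "real n > (2 * K + 1) * 2 / r" using n unfolding no_def by linarith
      then have "(2 * K + 1) * 2 < r * n" using r by (simp add: field_simps)
      then have small: "(2 * K + 1) / n < r / 2" using npos by (simp add: field_simps)
      have "real (g n) / n - a = (real (g n) - a * n) / n" using npos by (simp add: field_simps)
      then have "\<bar>real (g n) / n - a\<bar> = \<bar>real (g n) - a * n\<bar> / n" by simp
      also have "\<dots> \<le> (2 * e * n + 2 * K + 1) / n"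
        using bound[of n] npos by (simp add: divide_right_mono)
      also have "\<dots> = 2 * e + (2 * K + 1) / n" using npos by (simp add: field_simps)
      also have "\<dots> < r" using small unfolding e_def by linarith
      finally show "norm (real (counting D n) / real n - a) < r" by (simp add: cD)
    qed
  qed
  have "D \<subseteq> {1..}" using DB Bsub by auto
  with hD have "D \<in> density_sets" unfolding density_sets_def by auto
  moreover have "density D = a" using hD unfolding has_density_def density_def by (rule limI)
  ultimately show ?thesis using DB ABD da by auto
qed

end
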